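(* Let $f,g\in C[0,1]$. Let $R(f,g)=P(f,g)/Q(f,g)$, where $P(f,g)(x)=p(f(x),g(x))$ and $Q(f,g)(x)=q(f(x),g(x))$ for real polynomials $p,q$ in two variables, and where $Q(f,g)(x)\neq0$ for all $x\in[0,1]$. Then $$\overline{\dim}_B G(R(f,g))\le \max\{\overline{\dim}_B G(f),\ \overline{\dim}_B G(g)\}.$$
   Context: $C[0,1]$ is the space of real-valued continuous functions on $[0,1]$; $G(h)=\{(x,h(x)):x\in[0,1]\}\subset\mathbb{R}^2$ is the graph of $h$. For a nonempty bounded set $F$, $N_\delta(F)$ is the smallest number of sets of diameter at most $\delta$ covering $F$, and $\overline{\dim}_B F=\limsup_{\delta\to0}\frac{\log N_\delta(F)}{-\log\delta}$. *)

theory Defs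
  imports "HOL-Analysis.Analysis"
begin

definition graph01 :: "(real \<Rightarrow> real) \<Rightarrow> (real \<times> real) set" where
  "graph01 h = (\<lambda>x. (x, h x)) ` {0..1}"

definition cover_num :: "real \<Rightarrow> 'a::metric_space set \<Rightarrow> nat" where
  "cover_num \<delta> F = (LEAST n. \<exists>C. finite C \<and> card C = n \<and> F \<subseteq> \<Union>C \<and>
      (\<forall>S\<in>C. bounded S \<and> diameter S \<le> \<delta>))"

definition upper_box_dim :: "'a::metric_space set \<Rightarrow> ereal" where
  "upper_box_dim F = Limsup (at_right 0)
     (\<lambda>\<delta>. ereal (ln (real (cover_num \<delta> F)) / - ln \<delta>))"

definition poly2 :: "nat \<Rightarrow> (nat \<Rightarrow> nat \<Rightarrow> real) \<Rightarrow> real \<Rightarrow> real \<Rightarrow> real" where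
  "poly2 n a u v = (\<Sum>i\<le>n. \<Sum>j\<le>n. a i j * u ^ i * v ^ j)"

end

theory Submission imports Defs "HOL-Real_Asymp.Real_Asymp" begin


lemma cover_num_le:
  assumes "finite C" "F \<subseteq> \<Union>C" "\<forall>S\<in>C. bounded S \<and> diameter S \<le> \<delta>"
  shows "cover_num \<delta> F \<le> card C"
  unfolding cover_num_def by (rule Least_le) (use assms in blast)

lemma cover_num_ex:
  assumes "finite C" "F \<subseteq> \<Union>C" "\<forall>S\<in>C. bounded S \<and> diameter S \<le> \<delta>"
  shows "\<exists>C. finite C \<and> card C = cover_num \<delta> F \<and> F \<subseteq> \<Union>C \<and> (\<forall>S\<in>C. bounded S \<and> diameter S \<le> \<delta>)"
  unfolding cover_num_def by (rule LeastI_ex) (use assms in blast)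

lemma flc: fixes x :: real shows "real_of_int \<lfloor>x\<rfloor> \<le> x" "x < real_of_int \<lfloor>x\<rfloor> + 1"
  using floor_correct[of x] by simp_all

definition cell :: "real \<Rightarrow> real \<times> real \<Rightarrow> int \<times> int" where
  "cell w p = (\<lfloor>fst p / w\<rfloor>, \<lfloor>snd p / w\<rfloor>)"

definition cells :: "real \<Rightarrow> (real \<Rightarrow> real) \<Rightarrow> (int \<times> int) set" where
  "cells w u = cell w ` graph01 u"

lemma graph_compact:
  fixes u :: "real \<Rightarrow> real"
  assumes "continuous_on {0..1} u"
  shows "compact (graph01 u)"
  unfolding graph01_def
  by (intro compact_continuous_image continuous_intros assms) auto

lemma graph_ne: "graph01 u \<noteq> {}"
  unfolding graph01_def by auto

lemma bounded_fun:
  fixes u :: "real \<Rightarrow> real"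
  assumes "continuous_on {0..1} u"
  shows "\<exists>B. \<forall>x\<in>{0..1}. \<bar>u x\<bar> \<le> B"
proof -
  have "compact (u ` {0..1})" by (intro compact_continuous_image assms compact_Icc)
  then have "bounded (u ` {0..1})" by (rule compact_imp_bounded)
  then show ?thesis unfolding bounded_real by auto
qed

lemma floor_same_close:
  fixes a b w :: real
  assumes "w > 0" "\<lfloor>a / w\<rfloor> = \<lfloor>b / w\<rfloor>"
  shows "\<bar>a - b\<bar> < w"
proof -
  have "\<bar>a / w - b / w\<bar> < 1"
    using assms(2) flc[of "a/w"] flc[of "b/w"] by linarith
  have e: "a - b = w * (a / w - b / w)" using assms(1) by (simp add: right_diff_distrib)
  have "w * \<bar>a / w - b / w\<bar> < w * 1" using \<open>\<bar>a / w - b / w\<bar> < 1\<close> assms(1) by (rule mult_strict_left_mono)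
  then show ?thesis using assms(1) by (subst e) (simp add: abs_mult)
qed

lemma floor_diff_bound:
  fixes a b w T :: real
  assumes "w > 0" "\<bar>a - b\<bar> \<le> w * T"
  shows "\<lfloor>a / w\<rfloor> \<le> \<lfloor>b / w\<rfloor> + \<lceil>T\<rceil>"
proof -
  have "a / w \<le> b / w + T"
  proof -
    have "a - b \<le> w * T" using assms by linarith
    then have "(a - b) / w \<le> T" using assms(1) by (simp add: divide_le_eq mult.commute)
    then show ?thesis by (simp add: diff_divide_distrib)
  qed
  then have "real_of_int \<lfloor>a / w\<rfloor> < real_of_int (\<lfloor>b / w\<rfloor> + \<lceil>T\<rceil> + 1)"
    unfolding of_int_add of_int_1 using flc[of "a/w"] flc[of "b/w"] le_of_int_ceiling[of T] by linarith
  then have "\<lfloor>a / w\<rfloor> < \<lfloor>b / w\<rfloor> + \<lceil>T\<rceil> + 1" by (simp only: of_int_less_iff)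
  then show ?thesis by simp
qed

lemma cells_finite:
  fixes u :: "real \<Rightarrow> real"
  assumes "w > 0" "continuous_on {0..1} u"
  shows "finite (cells w u)"
proof -
  obtain B where B: "\<forall>x\<in>{0..1}. \<bar>u x\<bar> \<le> B" using bounded_fun[OF assms(2)] by blast
  have "cells w u \<subseteq> {\<lfloor>0/w\<rfloor>..\<lfloor>1/w\<rfloor>} \<times> {\<lfloor>-B/w\<rfloor>..\<lfloor>B/w\<rfloor>}"
  proof
    fix c assume "c \<in> cells w u"
    then obtain x where x: "x \<in> {0..1}" "c = (\<lfloor>x/w\<rfloor>, \<lfloor>u x/w\<rfloor>)"
      unfolding cells_def graph01_def cell_def by auto
    have "-B \<le> u x" "u x \<le> B" using B x(1) by force+
    then have "(-B)/w \<le> u x/w" "u x/w \<le> B/w" using assms(1) by (simp_all only: divide_right_mono less_imp_le)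
    moreover have "0/w \<le> x/w" "x/w \<le> 1/w" using x(1) assms(1) by (simp_all add: divide_right_mono)
    ultimately have "\<lfloor>(-B)/w\<rfloor> \<le> \<lfloor>u x/w\<rfloor>" "\<lfloor>u x/w\<rfloor> \<le> \<lfloor>B/w\<rfloor>"
       "\<lfloor>0/w\<rfloor> \<le> \<lfloor>x/w\<rfloor>" "\<lfloor>x/w\<rfloor> \<le> \<lfloor>1/w\<rfloor>"
      by (meson floor_mono)+
    then show "c \<in> {\<lfloor>0/w\<rfloor>..\<lfloor>1/w\<rfloor>} \<times> {\<lfloor>-B/w\<rfloor>..\<lfloor>B/w\<rfloor>}"
      using x(2) by simp
  qed
  then show ?thesis by (rule finite_subset) simp
qed

lemma cover_upper:
  fixes u :: "real \<Rightarrow> real"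
  assumes "w > 0" "continuous_on {0..1} u"
  shows "cover_num (2*w) (graph01 u) \<le> card (cells w u)"
    and "\<exists>C. finite C \<and> graph01 u \<subseteq> \<Union>C \<and> (\<forall>S\<in>C. bounded S \<and> diameter S \<le> 2*w)"
proof -
  define C where "C = (\<lambda>c. {p\<in>graph01 u. cell w p = c}) ` cells w u"
  have fin: "finite C" unfolding C_def using cells_finite[OF assms] by simp
  have cov: "graph01 u \<subseteq> \<Union>C" unfolding C_def cells_def by auto
  have bd: "bounded (graph01 u)" using graph_compact[OF assms(2)] compact_imp_bounded by blast
  have good: "\<forall>S\<in>C. bounded S \<and> diameter S \<le> 2*w"
  proof
    fix S assume "S \<in> C"
    then obtain c where S: "S = {p\<in>graph01 u. cell w p = c}" unfolding C_def by auto
    have "bounded S" using bd S by (auto intro: bounded_subset)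
    moreover have "diameter S \<le> 2*w"
    proof (rule diameter_le)
      show "S \<noteq> {} \<or> 0 \<le> 2*w" using assms by simp
      fix p q assume "p \<in> S" "q \<in> S"
      then have e: "\<lfloor>fst p / w\<rfloor> = \<lfloor>fst q / w\<rfloor>" "\<lfloor>snd p / w\<rfloor> = \<lfloor>snd q / w\<rfloor>"
        using S by (auto simp: cell_def)
      have a: "\<bar>fst p - fst q\<bar> < w" "\<bar>snd p - snd q\<bar> < w"
        using floor_same_close[OF assms(1) e(1)] floor_same_close[OF assms(1) e(2)] by auto
      have "norm (p - q) = sqrt ((fst p - fst q)\<^sup>2 + (snd p - snd q)\<^sup>2)"
        by (cases p, cases q) (simp add: norm_Pair)
      also have "\<dots> \<le> \<bar>fst p - fst q\<bar> + \<bar>snd p - snd q\<bar>" by (rule sqrt_sum_squares_le_sum_abs)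
      finally show "norm (p - q) \<le> 2*w" using a by linarith
    qed
    ultimately show "bounded S \<and> diameter S \<le> 2*w" by simp
  qed
  have "card C \<le> card (cells w u)" unfolding C_def by (rule card_image_le) (rule cells_finite[OF assms])
  then show "cover_num (2*w) (graph01 u) \<le> card (cells w u)"
    using cover_num_le[OF fin cov good] by linarith
  show "\<exists>C. finite C \<and> graph01 u \<subseteq> \<Union>C \<and> (\<forall>S\<in>C. bounded S \<and> diameter S \<le> 2*w)"
    using fin cov good by blast
qed

lemma cover_num_pos:
  fixes u :: "real \<Rightarrow> real"
  assumes "w > 0" "continuous_on {0..1} u"
  shows "cover_num (2*w) (graph01 u) \<ge> 1"
proof -
  obtain C0 where C0: "finite C0" "graph01 u \<subseteq> \<Union>C0" "\<forall>S\<in>C0. bounded S \<and> diameter S \<le> 2*w"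
    using cover_upper(2)[OF assms] by blast
  obtain C where C: "finite C" "card C = cover_num (2*w) (graph01 u)" "graph01 u \<subseteq> \<Union>C"
    "\<forall>S\<in>C. bounded S \<and> diameter S \<le> 2*w"
    using cover_num_ex[OF C0] by blast
  show ?thesis
  proof (rule ccontr)
    assume "\<not> ?thesis"
    then have "card C = 0" using C(2) by simp
    then have "C = {}" using C(1) by simp
    then show False using C(3) graph_ne[of u] by simp
  qed
qed

lemma cover_lower:
  fixes u :: "real \<Rightarrow> real"
  assumes "w > 0" "continuous_on {0..1} u"
  shows "card (cells w u) \<le> 25 * cover_num (2*w) (graph01 u)"
proof -
  obtain C0 where C0: "finite C0" "graph01 u \<subseteq> \<Union>C0" "\<forall>S\<in>C0. bounded S \<and> diameter S \<le> 2*w"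
    using cover_upper(2)[OF assms] by blast
  obtain C where C: "finite C" "card C = cover_num (2*w) (graph01 u)" "graph01 u \<subseteq> \<Union>C"
    "\<forall>S\<in>C. bounded S \<and> diameter S \<le> 2*w"
    using cover_num_ex[OF C0] by blast
  have sub: "cells w u \<subseteq> (\<Union>S\<in>C. cell w ` (S \<inter> graph01 u))"
    unfolding cells_def using C(3) by blast
  have each: "card (cell w ` (S \<inter> graph01 u)) \<le> 25" if "S \<in> C" for S
  proof (cases "S \<inter> graph01 u = {}")
    case True then show ?thesis by simp
  next
    case False
    then obtain p0 where p0: "p0 \<in> S" by blast
    define i0 where "i0 = \<lfloor>fst p0 / w\<rfloor>"
    define j0 where "j0 = \<lfloor>snd p0 / w\<rfloor>"
    have bS: "bounded S" and dS: "diameter S \<le> 2*w" using C(4) that by auto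
    have "cell w ` (S \<inter> graph01 u) \<subseteq> {i0-2..i0+2} \<times> {j0-2..j0+2}"
    proof
      fix c assume "c \<in> cell w ` (S \<inter> graph01 u)"
      then obtain p where p: "p \<in> S" "c = cell w p" by auto
      have "dist p p0 \<le> diameter S" using bS p(1) p0 by (rule diameter_bounded_bound)
      then have d: "dist p p0 \<le> w * 2" using dS by linarith
      have h1: "\<bar>fst p - fst p0\<bar> \<le> w * 2" using dist_fst_le[of p p0] d by (simp add: dist_real_def)
      have h2: "\<bar>snd p - snd p0\<bar> \<le> w * 2" using dist_snd_le[of p p0] d by (simp add: dist_real_def)
      have h1': "\<bar>fst p0 - fst p\<bar> \<le> w * 2" using h1 by linarith
      have h2': "\<bar>snd p0 - snd p\<bar> \<le> w * 2" using h2 by linarith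
      have "\<lfloor>fst p / w\<rfloor> \<le> i0 + 2" unfolding i0_def using floor_diff_bound[OF assms(1) h1] by simp
      moreover have "i0 \<le> \<lfloor>fst p / w\<rfloor> + 2" unfolding i0_def using floor_diff_bound[OF assms(1) h1'] by simp
      moreover have "\<lfloor>snd p / w\<rfloor> \<le> j0 + 2" unfolding j0_def using floor_diff_bound[OF assms(1) h2] by simp
      moreover have "j0 \<le> \<lfloor>snd p / w\<rfloor> + 2" unfolding j0_def using floor_diff_bound[OF assms(1) h2'] by simp
      ultimately show "c \<in> {i0-2..i0+2} \<times> {j0-2..j0+2}" using p(2) unfolding cell_def by simp
    qed
    then have "card (cell w ` (S \<inter> graph01 u)) \<le> card ({i0-2..i0+2} \<times> {j0-2..j0+2})"
      by (intro card_mono) simp_all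
    also have "\<dots> = 25" by (simp add: card_cartesian_product)
    finally show ?thesis .
  qed
  have "(\<Union>S\<in>C. cell w ` (S \<inter> graph01 u)) \<subseteq> cells w u" unfolding cells_def by blast
  then have finU: "finite (\<Union>S\<in>C. cell w ` (S \<inter> graph01 u))"
    using cells_finite[OF assms] by (rule finite_subset)
  have "card (cells w u) \<le> card (\<Union>S\<in>C. cell w ` (S \<inter> graph01 u))"
    using sub finU by (rule card_mono[rotated])
  also have "\<dots> \<le> (\<Sum>S\<in>C. card (cell w ` (S \<inter> graph01 u)))" by (rule card_UN_le[OF C(1)])
  also have "\<dots> \<le> (\<Sum>S\<in>C. 25)" by (rule sum_mono) (rule each)
  also have "\<dots> = 25 * card C" by simp
  finally show ?thesis using C(2) by simp
qed



definition col :: "real \<Rightarrow> int \<Rightarrow> real set" where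
  "col w i = {x\<in>{0..1}. \<lfloor>x/w\<rfloor> = i}"

definition rowz :: "real \<Rightarrow> (real \<Rightarrow> real) \<Rightarrow> int \<Rightarrow> int set" where
  "rowz w u i = (\<lambda>x. \<lfloor>u x / w\<rfloor>) ` col w i"

definition colz :: "real \<Rightarrow> int set" where
  "colz w = (\<lambda>x. \<lfloor>x/w\<rfloor>) ` {0..1}"

lemma cells_Sigma: "cells w u = Sigma (colz w) (rowz w u)"
proof (rule set_eqI, rule iffI)
  fix c assume "c \<in> cells w u"
  then obtain x where "x\<in>{0..1}" "c = (\<lfloor>x/w\<rfloor>, \<lfloor>u x/w\<rfloor>)"
    unfolding cells_def graph01_def cell_def by auto
  then show "c \<in> Sigma (colz w) (rowz w u)" unfolding colz_def rowz_def col_def by auto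
next
  fix c assume "c \<in> Sigma (colz w) (rowz w u)"
  then obtain y where "y\<in>{0..1}" "c = (\<lfloor>y/w\<rfloor>, \<lfloor>u y/w\<rfloor>)"
    unfolding colz_def rowz_def col_def by force
  then show "c \<in> cells w u" unfolding cells_def graph01_def cell_def
    by (intro image_eqI[where x="(y, u y)"]) auto
qed

lemma rowz_finite:
  fixes u :: "real \<Rightarrow> real"
  assumes "w > 0" "continuous_on {0..1} u"
  shows "finite (rowz w u i)"
proof -
  have "rowz w u i \<subseteq> snd ` cells w u"
    unfolding cells_def rowz_def col_def graph01_def cell_def by force
  then show ?thesis using cells_finite[OF assms] by (meson finite_imageI finite_subset)
qed

lemma colz_finite:
  assumes "w > 0"
  shows "finite (colz w)"
proof -
  have "colz w = fst ` cells w (\<lambda>x. 0)"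
    unfolding cells_def colz_def graph01_def cell_def by force
  then show ?thesis using cells_finite[OF assms, of "\<lambda>x. 0"] by simp
qed

lemma col_between:
  assumes "x \<in> col w i" "y \<in> col w i" "x \<le> z" "z \<le> y" "w > 0"
  shows "z \<in> col w i"
proof -
  have "\<lfloor>x/w\<rfloor> \<le> \<lfloor>z/w\<rfloor>" "\<lfloor>z/w\<rfloor> \<le> \<lfloor>y/w\<rfloor>"
    using assms by (meson divide_right_mono floor_mono less_imp_le)+
  then show ?thesis using assms unfolding col_def by auto
qed

lemma contig_aux:
  fixes u :: "real \<Rightarrow> real"
  assumes w: "w > 0" and u: "continuous_on {0..1} u"
    and x: "x \<in> col w i" and y: "y \<in> col w i" and le: "u x \<le> u y"
  shows "u y - u x < w * real (card (rowz w u i))"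
proof -
  define a where "a = \<lfloor>u x / w\<rfloor>"
  define b where "b = \<lfloor>u y / w\<rfloor>"
  have ab: "a \<le> b" unfolding a_def b_def using le w by (meson divide_right_mono floor_mono less_imp_le)
  have sub: "{a..b} \<subseteq> rowz w u i"
  proof
    fix r assume r: "r \<in> {a..b}"
    show "r \<in> rowz w u i"
    proof (cases "r = a")
      case True then show ?thesis using x unfolding rowz_def a_def by auto
    next
      case False
      then have "a + 1 \<le> r" "r \<le> b" using r by auto
      then have r1: "real_of_int (a+1) \<le> real_of_int r" "real_of_int r \<le> real_of_int b"
        by (simp_all only: of_int_le_iff)
      have "u x / w < r" "r \<le> u y / w"
        using r1 flc[of "u x / w"] flc[of "u y / w"] unfolding a_def b_def of_int_add of_int_1 by linarith+
      then have lo: "u x < r * w" and hi: "r * w \<le> u y" using w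
        by (simp_all add: divide_less_eq le_divide_eq)
      have xy01: "x \<in> {0..1}" "y \<in> {0..1}" using x y unfolding col_def by auto
      obtain z where z: "min x y \<le> z" "z \<le> max x y" "u z = r * w"
      proof (cases "x \<le> y")
        case True
        have "continuous_on {x..y} u" by (rule continuous_on_subset[OF u]) (use xy01 in auto)
        then obtain z where "x \<le> z" "z \<le> y" "u z = r * w" using IVT'[of u x "r*w" y] lo hi True by auto
        then show ?thesis using that True by auto
      next
        case False
        have "continuous_on {y..x} u" by (rule continuous_on_subset[OF u]) (use xy01 in auto)
        then obtain z where "y \<le> z" "z \<le> x" "u z = r * w" using IVT2'[of u x "r*w" y] lo hi False by auto
        then show ?thesis using that False by auto
      qed
      have "z \<in> col w i"
      proof (cases "x \<le> y")
        case True then show ?thesis using col_between[OF x y _ _ w] z by auto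
      next
        case False then show ?thesis using col_between[OF y x _ _ w] z by auto
      qed
      moreover have "\<lfloor>u z / w\<rfloor> = r" using z(3) w by simp
      ultimately show ?thesis unfolding rowz_def by force
    qed
  qed
  have "card {a..b} \<le> card (rowz w u i)" using sub rowz_finite[OF w u] by (rule card_mono[rotated])
  then have "real_of_int (b - a + 1) \<le> real (card (rowz w u i))" using ab by simp
  moreover have "u y / w - u x / w < real_of_int (b - a + 1)"
    unfolding a_def b_def of_int_add of_int_diff of_int_1 using flc[of "u x / w"] flc[of "u y / w"] by linarith
  ultimately have "u y / w - u x / w < real (card (rowz w u i))" by linarith
  then have "(u y - u x) / w < real (card (rowz w u i))" by (simp add: diff_divide_distrib)
  then show ?thesis using w by (simp add: divide_less_eq mult.commute)
qed

lemma contig: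
  fixes u :: "real \<Rightarrow> real"
  assumes w: "w > 0" and u: "continuous_on {0..1} u"
    and x: "x \<in> col w i" and y: "y \<in> col w i"
  shows "\<bar>u x - u y\<bar> \<le> w * real (card (rowz w u i))"
proof (cases "u x \<le> u y")
  case True then show ?thesis using contig_aux[OF w u x y] by linarith
next
  case False then show ?thesis using contig_aux[OF w u y x] by linarith
qed

lemma transfer:
  fixes f g h :: "real \<Rightarrow> real"
  assumes w: "w > 0" and f: "continuous_on {0..1} f" and g: "continuous_on {0..1} g"
    and h: "continuous_on {0..1} h" and L: "L \<ge> 0"
    and lip: "\<forall>x\<in>{0..1}. \<forall>y\<in>{0..1}. \<bar>h x - h y\<bar> \<le> L * (\<bar>f x - f y\<bar> + \<bar>g x - g y\<bar>)"
  shows "real (card (cells w h)) \<le> (2*L+5) * (real (card (cells w f)) + real (card (cells w g)))"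
proof -
  have col: "real (card (rowz w h i)) \<le> (2*L+5) * (real (card (rowz w f i)) + real (card (rowz w g i)))"
    if i: "i \<in> colz w" for i
  proof -
    obtain x0 where x0: "x0 \<in> col w i" using i unfolding colz_def col_def by auto
    define cf where "cf = real (card (rowz w f i))"
    define cg where "cg = real (card (rowz w g i))"
    define T where "T = L * (cf + cg)"
    define K where "K = \<lceil>T\<rceil>"
    define r0 where "r0 = \<lfloor>h x0 / w\<rfloor>"
    have "\<lfloor>f x0 / w\<rfloor> \<in> rowz w f i" unfolding rowz_def using x0 by blast
    then have "card (rowz w f i) > 0" using rowz_finite[OF w f, of i] card_gt_0_iff by blast
    then have cf1: "cf \<ge> 1" unfolding cf_def by linarith
    have cg0: "cg \<ge> 0" unfolding cg_def by simp
    have "rowz w h i \<subseteq> {r0 - K..r0 + K}"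
    proof
      fix r assume "r \<in> rowz w h i"
      then obtain y where y: "y \<in> col w i" "r = \<lfloor>h y / w\<rfloor>" unfolding rowz_def by auto
      have y01: "y \<in> {0..1}" "x0 \<in> {0..1}" using y x0 unfolding col_def by auto
      have "\<bar>h y - h x0\<bar> \<le> L * (\<bar>f y - f x0\<bar> + \<bar>g y - g x0\<bar>)" using lip y01 by blast
      also have "\<dots> \<le> L * (w * cf + w * cg)"
        using contig[OF w f y(1) x0] contig[OF w g y(1) x0] L unfolding cf_def cg_def
        by (intro mult_left_mono add_mono) auto
      also have "\<dots> = w * T" unfolding T_def by (simp add: algebra_simps)
      finally have d: "\<bar>h y - h x0\<bar> \<le> w * T" .
      then have d': "\<bar>h x0 - h y\<bar> \<le> w * T" by linarith
      show "r \<in> {r0 - K..r0 + K}"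
        using floor_diff_bound[OF w d] floor_diff_bound[OF w d'] unfolding y(2) r0_def K_def by simp
    qed
    then have "card (rowz w h i) \<le> card {r0 - K..r0 + K}" by (intro card_mono) auto
    have "T \<ge> 0" unfolding T_def using L cf1 cg0 by (intro mult_nonneg_nonneg) auto
    then have "K \<ge> 0" unfolding K_def by simp
    moreover note \<open>card (rowz w h i) \<le> card {r0 - K..r0 + K}\<close>
    ultimately have "real (card (rowz w h i)) \<le> real_of_int (2 * K + 1)" by simp
    also have "\<dots> \<le> 2 * T + 3" unfolding K_def using ceiling_correct[of T] by linarith
    also have "\<dots> \<le> (2*L+5) * (cf + cg)" unfolding T_def using cf1 cg0 L
      by (simp add: algebra_simps)
    finally show ?thesis unfolding cf_def cg_def .
  qed
  have fin: "finite (colz w)" using colz_finite[OF w] .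
  have cs: "card (cells w u) = (\<Sum>i\<in>colz w. card (rowz w u i))" if "continuous_on {0..1} u" for u
    unfolding cells_Sigma using fin rowz_finite[OF w that] by (simp add: card_SigmaI)
  have "real (card (cells w h)) = (\<Sum>i\<in>colz w. real (card (rowz w h i)))"
    unfolding cs[OF h] by simp
  also have "\<dots> \<le> (\<Sum>i\<in>colz w. (2*L+5) * (real (card (rowz w f i)) + real (card (rowz w g i))))"
    by (rule sum_mono) (rule col)
  also have "\<dots> = (2*L+5) * (real (card (cells w f)) + real (card (cells w g)))"
    unfolding cs[OF f] cs[OF g] of_nat_sum by (simp add: sum_distrib_left[symmetric] sum.distrib)
  finally show ?thesis .
qed



definition ctrl :: "(real\<Rightarrow>real) \<Rightarrow> (real\<Rightarrow>real) \<Rightarrow> (real\<Rightarrow>real) \<Rightarrow> bool" where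
 "ctrl f g k \<longleftrightarrow> (\<exists>B. \<forall>x\<in>{0..1}. \<bar>k x\<bar> \<le> B) \<and>
    (\<exists>L\<ge>0. \<forall>x\<in>{0..1}. \<forall>y\<in>{0..1}. \<bar>k x - k y\<bar> \<le> L * (\<bar>f x - f y\<bar> + \<bar>g x - g y\<bar>))"

lemma ctrl_const: "ctrl f g (\<lambda>x. c)"
  unfolding ctrl_def by (auto intro!: exI[of _ "\<bar>c\<bar>"])

lemma ctrl_f: assumes "continuous_on {0..1} f" shows "ctrl f g f"
proof -
  obtain B where "\<forall>x\<in>{0..1}. \<bar>f x\<bar> \<le> B" using bounded_fun[OF assms] by blast
  moreover have "\<forall>x\<in>{0..1}. \<forall>y\<in>{0..1}. \<bar>f x - f y\<bar> \<le> 1 * (\<bar>f x - f y\<bar> + \<bar>g x - g y\<bar>)" by simp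
  ultimately show ?thesis unfolding ctrl_def by (intro conjI exI[of _ B] exI[of _ 1]) auto
qed

lemma ctrl_g: assumes "continuous_on {0..1} g" shows "ctrl f g g"
proof -
  obtain B where "\<forall>x\<in>{0..1}. \<bar>g x\<bar> \<le> B" using bounded_fun[OF assms] by blast
  moreover have "\<forall>x\<in>{0..1}. \<forall>y\<in>{0..1}. \<bar>g x - g y\<bar> \<le> 1 * (\<bar>f x - f y\<bar> + \<bar>g x - g y\<bar>)" by simp
  ultimately show ?thesis unfolding ctrl_def by (intro conjI exI[of _ B] exI[of _ 1]) auto
qed

lemma ctrl_add: assumes "ctrl f g k1" "ctrl f g k2" shows "ctrl f g (\<lambda>x. k1 x + k2 x)"
proof -
  obtain B1 L1 where 1: "\<forall>x\<in>{0..1}. \<bar>k1 x\<bar> \<le> B1" "L1 \<ge> 0"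
    "\<forall>x\<in>{0..1}. \<forall>y\<in>{0..1}. \<bar>k1 x - k1 y\<bar> \<le> L1 * (\<bar>f x - f y\<bar> + \<bar>g x - g y\<bar>)"
    using assms(1) unfolding ctrl_def by blast
  obtain B2 L2 where 2: "\<forall>x\<in>{0..1}. \<bar>k2 x\<bar> \<le> B2" "L2 \<ge> 0"
    "\<forall>x\<in>{0..1}. \<forall>y\<in>{0..1}. \<bar>k2 x - k2 y\<bar> \<le> L2 * (\<bar>f x - f y\<bar> + \<bar>g x - g y\<bar>)"
    using assms(2) unfolding ctrl_def by blast
  have b: "\<forall>x\<in>{0..1}. \<bar>k1 x + k2 x\<bar> \<le> B1 + B2"
  proof
    fix x :: real assume "x \<in> {0..1}"
    then have "\<bar>k1 x\<bar> \<le> B1" "\<bar>k2 x\<bar> \<le> B2" using 1 2 by auto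
    then show "\<bar>k1 x + k2 x\<bar> \<le> B1 + B2" by linarith
  qed
  have l: "\<forall>x\<in>{0..1}. \<forall>y\<in>{0..1}. \<bar>(k1 x + k2 x) - (k1 y + k2 y)\<bar> \<le> (L1 + L2) * (\<bar>f x - f y\<bar> + \<bar>g x - g y\<bar>)"
  proof (intro ballI)
    fix x y :: real assume "x \<in> {0..1}" "y \<in> {0..1}"
    then have "\<bar>k1 x - k1 y\<bar> \<le> L1 * (\<bar>f x - f y\<bar> + \<bar>g x - g y\<bar>)"
      "\<bar>k2 x - k2 y\<bar> \<le> L2 * (\<bar>f x - f y\<bar> + \<bar>g x - g y\<bar>)" using 1 2 by auto
    then show "\<bar>(k1 x + k2 x) - (k1 y + k2 y)\<bar> \<le> (L1 + L2) * (\<bar>f x - f y\<bar> + \<bar>g x - g y\<bar>)"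
      by (simp add: distrib_right) linarith
  qed
  show ?thesis unfolding ctrl_def using b l 1(2) 2(2) by (intro conjI exI[of _ "B1+B2"] exI[of _ "L1+L2"]) auto
qed

lemma ctrl_mult: assumes "ctrl f g k1" "ctrl f g k2" shows "ctrl f g (\<lambda>x. k1 x * k2 x)"
proof -
  obtain B1 L1 where 1: "\<forall>x\<in>{0..1}. \<bar>k1 x\<bar> \<le> B1" "L1 \<ge> 0"
    "\<forall>x\<in>{0..1}. \<forall>y\<in>{0..1}. \<bar>k1 x - k1 y\<bar> \<le> L1 * (\<bar>f x - f y\<bar> + \<bar>g x - g y\<bar>)"
    using assms(1) unfolding ctrl_def by blast
  obtain B2 L2 where 2: "\<forall>x\<in>{0..1}. \<bar>k2 x\<bar> \<le> B2" "L2 \<ge> 0"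
    "\<forall>x\<in>{0..1}. \<forall>y\<in>{0..1}. \<bar>k2 x - k2 y\<bar> \<le> L2 * (\<bar>f x - f y\<bar> + \<bar>g x - g y\<bar>)"
    using assms(2) unfolding ctrl_def by blast
  have B1: "B1 \<ge> 0" using 1(1) by (metis abs_ge_zero atLeastAtMost_iff order_trans zero_le_one order_refl)
  have B2: "B2 \<ge> 0" using 2(1) by (metis abs_ge_zero atLeastAtMost_iff order_trans zero_le_one order_refl)
  have b: "\<forall>x\<in>{0..1}. \<bar>k1 x * k2 x\<bar> \<le> B1 * B2"
  proof
    fix x :: real assume "x \<in> {0..1}"
    then have "\<bar>k1 x\<bar> \<le> B1" "\<bar>k2 x\<bar> \<le> B2" using 1 2 by auto
    then show "\<bar>k1 x * k2 x\<bar> \<le> B1 * B2" unfolding abs_mult using B1 by (intro mult_mono) auto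
  qed
  have l: "\<forall>x\<in>{0..1}. \<forall>y\<in>{0..1}. \<bar>k1 x * k2 x - k1 y * k2 y\<bar> \<le> (B1 * L2 + B2 * L1) * (\<bar>f x - f y\<bar> + \<bar>g x - g y\<bar>)"
  proof (intro ballI)
    fix x y :: real assume xy: "x \<in> {0..1}" "y \<in> {0..1}"
    define s where "s = \<bar>f x - f y\<bar> + \<bar>g x - g y\<bar>"
    have d1: "\<bar>k1 x - k1 y\<bar> \<le> L1 * s" and d2: "\<bar>k2 x - k2 y\<bar> \<le> L2 * s"
      using 1 2 xy unfolding s_def by auto
    have a1: "\<bar>k1 x\<bar> \<le> B1" and a2: "\<bar>k2 y\<bar> \<le> B2" using 1 2 xy by auto
    have "k1 x * k2 x - k1 y * k2 y = k1 x * (k2 x - k2 y) + k2 y * (k1 x - k1 y)"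
      by (simp add: algebra_simps)
    then have "\<bar>k1 x * k2 x - k1 y * k2 y\<bar> \<le> \<bar>k1 x\<bar> * \<bar>k2 x - k2 y\<bar> + \<bar>k2 y\<bar> * \<bar>k1 x - k1 y\<bar>"
      by (metis abs_mult abs_triangle_ineq)
    also have "\<dots> \<le> B1 * (L2 * s) + B2 * (L1 * s)"
      using a1 a2 d1 d2 B1 B2 by (intro add_mono mult_mono) auto
    also have "\<dots> = (B1 * L2 + B2 * L1) * s" by (simp add: algebra_simps)
    finally show "\<bar>k1 x * k2 x - k1 y * k2 y\<bar> \<le> (B1 * L2 + B2 * L1) * (\<bar>f x - f y\<bar> + \<bar>g x - g y\<bar>)"
      unfolding s_def .
  qed
  have "B1 * L2 + B2 * L1 \<ge> 0" using B1 B2 1(2) 2(2) by simp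
  then show ?thesis unfolding ctrl_def using b l by blast
qed

lemma ctrl_sum: assumes "finite A" "\<forall>i\<in>A. ctrl f g (k i)" shows "ctrl f g (\<lambda>x. \<Sum>i\<in>A. k i x)"
  using assms
proof (induction A rule: finite_induct)
  case empty then show ?case using ctrl_const[of f g 0] by simp
next
  case (insert a A) then show ?case using ctrl_add[of f g "k a" "\<lambda>x. \<Sum>i\<in>A. k i x"] by simp
qed

lemma ctrl_power: assumes "ctrl f g k" shows "ctrl f g (\<lambda>x. k x ^ n)"
proof (induction n)
  case 0 then show ?case using ctrl_const[of f g 1] by simp
next
  case (Suc n) then show ?case using ctrl_mult[OF assms Suc] by simp
qed

lemma ctrl_inverse: assumes "ctrl f g k" "c > 0" "\<forall>x\<in>{0..1}. c \<le> \<bar>k x\<bar>"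
  shows "ctrl f g (\<lambda>x. 1 / k x)"
proof -
  obtain L where L: "L \<ge> 0"
    "\<forall>x\<in>{0..1}. \<forall>y\<in>{0..1}. \<bar>k x - k y\<bar> \<le> L * (\<bar>f x - f y\<bar> + \<bar>g x - g y\<bar>)"
    using assms(1) unfolding ctrl_def by blast
  have b: "\<forall>x\<in>{0..1}. \<bar>1 / k x\<bar> \<le> 1 / c"
  proof
    fix x :: real assume "x \<in> {0..1}"
    then have "c \<le> \<bar>k x\<bar>" using assms(3) by auto
    then show "\<bar>1 / k x\<bar> \<le> 1 / c" using assms(2) by (simp add: frac_le)
  qed
  have l: "\<forall>x\<in>{0..1}. \<forall>y\<in>{0..1}. \<bar>1 / k x - 1 / k y\<bar> \<le> (L / (c*c)) * (\<bar>f x - f y\<bar> + \<bar>g x - g y\<bar>)"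
  proof (intro ballI)
    fix x y :: real assume xy: "x \<in> {0..1}" "y \<in> {0..1}"
    define s where "s = \<bar>f x - f y\<bar> + \<bar>g x - g y\<bar>"
    have cx: "c \<le> \<bar>k x\<bar>" and cy: "c \<le> \<bar>k y\<bar>" using assms(3) xy by auto
    have nz: "k x \<noteq> 0" "k y \<noteq> 0" using cx cy assms(2) by auto
    have d: "\<bar>k x - k y\<bar> \<le> L * s" using L xy unfolding s_def by auto
    have "1 / k x - 1 / k y = (k y - k x) / (k x * k y)" using nz by (simp add: field_simps)
    then have "\<bar>1 / k x - 1 / k y\<bar> = \<bar>k x - k y\<bar> / (\<bar>k x\<bar> * \<bar>k y\<bar>)"
      by (simp add: abs_mult abs_minus_commute)
    also have "\<dots> \<le> \<bar>k x - k y\<bar> / (c * c)"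
      using cx cy assms(2) by (intro frac_le mult_mono) auto
    also have "\<dots> \<le> (L * s) / (c * c)" using d assms(2) by (intro divide_right_mono) auto
    also have "\<dots> = (L / (c*c)) * s" by simp
    finally show "\<bar>1 / k x - 1 / k y\<bar> \<le> (L / (c*c)) * (\<bar>f x - f y\<bar> + \<bar>g x - g y\<bar>)" unfolding s_def .
  qed
  have "L / (c*c) \<ge> 0" using L(1) assms(2) by simp
  then show ?thesis unfolding ctrl_def using b l by blast
qed

lemma ctrl_poly2:
  assumes "continuous_on {0..1} f" "continuous_on {0..1} g"
  shows "ctrl f g (\<lambda>x. poly2 n a (f x) (g x))"
  unfolding poly2_def
  by (intro ctrl_sum ballI finite_atMost ctrl_mult ctrl_const ctrl_power ctrl_f ctrl_g assms)



lemma tend0: "((\<lambda>\<delta>::real. C / - ln \<delta>) \<longlongrightarrow> 0) (at_right 0)"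
  by real_asymp

lemma limsup_final:
  fixes rh rf rg e :: "real \<Rightarrow> real"
  assumes ev: "eventually (\<lambda>\<delta>. rh \<delta> \<le> e \<delta> + max (rf \<delta>) (rg \<delta>)) (at_right 0)"
    and e: "(e \<longlongrightarrow> 0) (at_right 0)"
  shows "Limsup (at_right 0) (\<lambda>\<delta>. ereal (rh \<delta>)) \<le>
     max (Limsup (at_right 0) (\<lambda>\<delta>. ereal (rf \<delta>))) (Limsup (at_right 0) (\<lambda>\<delta>. ereal (rg \<delta>)))"
    (is "_ \<le> ?M")
  unfolding Limsup_le_iff
proof (intro allI impI)
  fix y assume y: "y > ?M"
  obtain z where z: "?M < z" "z < y" using dense[OF y] by blast
  have e1: "eventually (\<lambda>\<delta>. ereal (rf \<delta>) < z) (at_right 0)"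
    by (rule Limsup_lessD) (use z(1) in simp)
  have e2: "eventually (\<lambda>\<delta>. ereal (rg \<delta>) < z) (at_right 0)"
    by (rule Limsup_lessD) (use z(1) in simp)
  show "eventually (\<lambda>\<delta>. ereal (rh \<delta>) < y) (at_right 0)"
  proof (cases y)
    case PInf then show ?thesis by simp
  next
    case MInf then show ?thesis using z by simp
  next
    case (real y')
    have "z \<noteq> \<infinity>" using z(2) by auto
    moreover have "z \<noteq> -\<infinity>" using z(1) by auto
    ultimately obtain z' where z': "z = ereal z'" by (cases z) auto
    have zy: "z' < y'" using z(2) z' real by simp
    have e3: "eventually (\<lambda>\<delta>. e \<delta> < y' - z') (at_right 0)"
      using order_tendstoD(2)[OF e, of "y' - z'"] zy by simp
    show ?thesis using ev e1 e2 e3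
    proof eventually_elim
      case (elim \<delta>)
      then have "rf \<delta> < z'" "rg \<delta> < z'" using z' by auto
      then have "rh \<delta> < y'" using elim by linarith
      then show ?case using real by simp
    qed
  qed
qed



theorem proposition3p8:
  fixes f g :: "real \<Rightarrow> real" and n m :: nat and a b :: "nat \<Rightarrow> nat \<Rightarrow> real"
  assumes "continuous_on {0..1} f" and "continuous_on {0..1} g"
    and "\<forall>x\<in>{0..1}. poly2 m b (f x) (g x) \<noteq> 0"
  shows "upper_box_dim (graph01 (\<lambda>x. poly2 n a (f x) (g x) / poly2 m b (f x) (g x)))
         \<le> max (upper_box_dim (graph01 f)) (upper_box_dim (graph01 g))"
proof -
  define P where "P = (\<lambda>x. poly2 n a (f x) (g x))"
  define Q where "Q = (\<lambda>x. poly2 m b (f x) (g x))"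
  define h where "h = (\<lambda>x. P x / Q x)"
  have contP: "continuous_on {0..1} P" unfolding P_def poly2_def
    by (intro continuous_intros assms)
  have contQ: "continuous_on {0..1} Q" unfolding Q_def poly2_def
    by (intro continuous_intros assms)
  have Qnz: "\<forall>x\<in>{0..1}. Q x \<noteq> 0" using assms(3) unfolding Q_def by blast
  have "continuous_on {0..1} (\<lambda>x. \<bar>Q x\<bar>)" by (intro continuous_intros contQ)
  then obtain x0 where x0: "x0 \<in> {0..1}" "\<forall>y\<in>{0..1}. \<bar>Q x0\<bar> \<le> \<bar>Q y\<bar>"
    using continuous_attains_inf[of "{0..1::real}" "\<lambda>x. \<bar>Q x\<bar>"] by auto
  define c where "c = \<bar>Q x0\<bar>"
  have c: "c > 0" "\<forall>x\<in>{0..1}. c \<le> \<bar>Q x\<bar>" using x0 Qnz unfolding c_def by auto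
  have "ctrl f g (\<lambda>x. P x * (1 / Q x))"
    unfolding P_def
    by (intro ctrl_mult ctrl_poly2 assms ctrl_inverse[OF _ c(1) c(2)]) (simp add: Q_def ctrl_poly2 assms)
  then have "ctrl f g h" unfolding h_def by simp
  then obtain L where L: "L \<ge> 0"
    "\<forall>x\<in>{0..1}. \<forall>y\<in>{0..1}. \<bar>h x - h y\<bar> \<le> L * (\<bar>f x - f y\<bar> + \<bar>g x - g y\<bar>)"
    unfolding ctrl_def by blast
  have conth: "continuous_on {0..1} h" unfolding h_def
    by (intro continuous_on_divide contP contQ) (use Qnz in auto)
  define A where "A = 2*L+5"
  have A: "A \<ge> 1" unfolding A_def using L by simp
  define r where "r = (\<lambda>u \<delta>. ln (real (cover_num \<delta> (graph01 u))) / - ln \<delta>)"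
  have key: "r h \<delta> \<le> ln (50*A) / - ln \<delta> + max (r f \<delta>) (r g \<delta>)" if d: "0 < \<delta>" "\<delta> < 1" for \<delta>
  proof -
    define w where "w = \<delta> / 2"
    have w: "w > 0" and dw: "\<delta> = 2*w" using d unfolding w_def by auto
    define Nh where "Nh = real (cover_num \<delta> (graph01 h))"
    define Nf where "Nf = real (cover_num \<delta> (graph01 f))"
    define Ng where "Ng = real (cover_num \<delta> (graph01 g))"
    have Nh1: "Nh \<ge> 1" unfolding Nh_def dw using cover_num_pos[OF w conth] by simp
    have Nf1: "Nf \<ge> 1" unfolding Nf_def dw using cover_num_pos[OF w assms(1)] by simp
    have Ng1: "Ng \<ge> 1" unfolding Ng_def dw using cover_num_pos[OF w assms(2)] by simp
    have "Nh \<le> real (card (cells w h))" unfolding Nh_def dw using cover_upper(1)[OF w conth] by simp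
    also have "\<dots> \<le> A * (real (card (cells w f)) + real (card (cells w g)))"
      unfolding A_def by (rule transfer[OF w assms(1,2) conth L])
    also have "\<dots> \<le> A * (25 * Nf + 25 * Ng)"
    proof -
      have "real (card (cells w f)) \<le> 25 * Nf" unfolding Nf_def dw
        using cover_lower[OF w assms(1)] by (simp add: of_nat_le_iff[symmetric])
      moreover have "real (card (cells w g)) \<le> 25 * Ng" unfolding Ng_def dw
        using cover_lower[OF w assms(2)] by (simp add: of_nat_le_iff[symmetric])
      ultimately show ?thesis using A by (intro mult_left_mono) auto
    qed
    also have "\<dots> \<le> A * (50 * max Nf Ng)"
    proof -
      have mx: "25*Nf+25*Ng \<le> 50*max Nf Ng" by (cases "Nf \<le> Ng") (simp_all add: max_def)
      show ?thesis using mult_left_mono[OF mx, of A] A by simp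
    qed
    also have "\<dots> = (50 * A) * max Nf Ng" by simp
    finally have NB: "Nh \<le> (50 * A) * max Nf Ng" .
    have "ln Nh \<le> ln ((50 * A) * max Nf Ng)" using NB Nh1 by (subst ln_le_cancel_iff) auto
    also have "\<dots> = ln (50 * A) + ln (max Nf Ng)" using A Nf1 Ng1 by (simp add: ln_mult)
    also have "ln (max Nf Ng) = max (ln Nf) (ln Ng)" using Nf1 Ng1 by (simp add: max_def)
    finally have lnB: "ln Nh \<le> ln (50 * A) + max (ln Nf) (ln Ng)" .
    have pos: "- ln \<delta> > 0" using d by simp
    have "r h \<delta> = ln Nh / - ln \<delta>" unfolding r_def Nh_def ..
    also have "\<dots> \<le> (ln (50 * A) + max (ln Nf) (ln Ng)) / - ln \<delta>"
      using lnB pos by (intro divide_right_mono) auto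
    also have "\<dots> = ln (50*A) / - ln \<delta> + max (ln Nf / - ln \<delta>) (ln Ng / - ln \<delta>)"
    proof -
      have mx: "max (ln Nf) (ln Ng) / - ln \<delta> = max (ln Nf / - ln \<delta>) (ln Ng / - ln \<delta>)"
      proof (cases "ln Nf \<le> ln Ng")
        case True
        then have "ln Nf / - ln \<delta> \<le> ln Ng / - ln \<delta>" using pos by (intro divide_right_mono) auto
        with True show ?thesis by (simp only: max_def if_True)
      next
        case False
        then have "\<not> ln Nf / - ln \<delta> \<le> ln Ng / - ln \<delta>" using pos
          by (metis divide_le_cancel not_less)
        with False show ?thesis by (simp only: max_def if_False)
      qed
      show ?thesis by (simp only: add_divide_distrib mx)
    qed
    finally show ?thesis unfolding r_def Nf_def Ng_def .
  qed
  have ev: "eventually (\<lambda>\<delta>. r h \<delta> \<le> ln (50*A) / - ln \<delta> + max (r f \<delta>) (r g \<delta>)) (at_right 0)"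
    by (rule eventually_at_rightI[of 0 1]) (use key in auto)
  have "upper_box_dim (graph01 h) \<le> max (upper_box_dim (graph01 f)) (upper_box_dim (graph01 g))"
    unfolding upper_box_dim_def using limsup_final[OF ev tend0] unfolding r_def .
  then show ?thesis unfolding h_def P_def Q_def .
qed

end
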